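(* Consider a degree-corrected stochastic block model with $K$ communities, membership matrix $\Theta\in\mathbb M_{n,K}$ (every community nonempty), symmetric $B\in[0,1]^{K\times K}$ with $\mathrm{rank}(B)=K'\le K$, and node propensities $\vartheta\in\mathbb R^n_{+}$ with $\max_{i\in G_k}\vartheta_i=1$ for each $k$. Let $P=\mathrm{diag}(\vartheta)\Theta B\Theta^\intercal\mathrm{diag}(\vartheta)=U\Sigma U^\intercal$ be its eigenvalue decomposition with $U\in\mathbb R^{n\times K'}$ having orthonormal columns. Let $\phi_k\in\mathbb R^n$ agree with $\vartheta$ on $G_k$ and be zero elsewhere, $\Omega=\mathrm{diag}(\|\phi_1\|_2,\dots,\|\phi_K\|_2)$, $\bar B=\Omega B\Omega$, and let $\bar B=HDH^\intercal$ be its eigenvalue decomposition with $H\in\mathbb R^{K\times K'}$. Then: (a) If $K'=K$, then $\cos(U_{i\ast},U_{j\ast})=1$ whenever $\Theta_{i\ast}=\Theta_{j\ast}$ and $\cos(U_{i\ast},U_{j\ast})=0$ whenever $\Theta_{i\ast}\ne\Theta_{j\ast}$. (b) If $K'<K$, then $\cos(U_{i\ast},U_{j\ast})=1$ whenever $\Theta_{i\ast}=\Theta_{j\ast}$; and if the rows of $H$ are not pairwise proportional in the sense that there is a deterministic sequence $\xi'_n<1$ with $\max_{k\ne l}\cos(H_{k\ast},H_{l\ast})\le\xi'_n$, then for $\Theta_{i\ast}\ne\Theta_{j\ast}$, $\cos(U_{i\ast},U_{j\ast})=\cos(H_{g_i\ast},H_{g_j\ast})\le\xi'_n<1$.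
   Context: $\mathbb M_{n,K}$: $n\times K$ 0/1 matrices with exactly one $1$ per row; node $i$ belongs to community $g_i$ iff $\Theta_{ig_i}=1$; $G_k=\{i:g_i=k\}$. $M_{i\ast}$ denotes the $i$-th row. For vectors $a,b$, $\cos(a,b)=a^\intercal b/(\|a\|_2\|b\|_2)$. *)

theory Defs
  imports "HOL-Analysis.Analysis"
begin

definition membership_mat :: "real^'k^'n \<Rightarrow> bool" where
  "membership_mat Theta \<longleftrightarrow>
     (\<forall>i k. Theta$i$k = 0 \<or> Theta$i$k = 1) \<and> (\<forall>i. \<exists>!k. Theta$i$k = 1)"

definition comm :: "real^'k^'n \<Rightarrow> 'n \<Rightarrow> 'k" where
  "comm Theta i = (THE k. Theta$i$k = 1)"

definition vcos :: "real^'m \<Rightarrow> real^'m \<Rightarrow> real" where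
  "vcos a b = (a \<bullet> b) / (norm a * norm b)"

definition diag_mat :: "real^'n \<Rightarrow> real^'n^'n" where
  "diag_mat v = (\<chi> i j. if i = j then v$i else 0)"

definition is_diag :: "real^'n^'n \<Rightarrow> bool" where
  "is_diag S \<longleftrightarrow> (\<forall>a b. a \<noteq> b \<longrightarrow> S$a$b = 0)"

definition phi :: "real^'k^'n \<Rightarrow> real^'n \<Rightarrow> 'k \<Rightarrow> real^'n" where
  "phi Theta theta k = (\<chi> i. if comm Theta i = k then theta$i else 0)"

definition Omega_mat :: "real^'k^'n \<Rightarrow> real^'n \<Rightarrow> real^'k^'k" where
  "Omega_mat Theta theta = diag_mat (\<chi> k. norm (phi Theta theta k))"

end

theory Submission
  imports Defs
begin


lemma rinv_full_rank:
  fixes A :: "real^'m^'m"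
  assumes "rank A = CARD('m)"
  shows "\<exists>Ai. A ** Ai = mat 1"
  using assms full_rank_surjective matrix_right_invertible_surjective by metis

lemma proj_eq:
  fixes V W :: "real^'m^'n" and L G Li Gi :: "real^'m^'m"
  assumes V: "transpose V ** V = mat 1" and W: "transpose W ** W = mat 1"
    and Li: "L ** Li = mat 1" and Gi: "G ** Gi = mat 1"
    and eq: "V ** L ** transpose V = W ** G ** transpose W"
  shows "V ** transpose V = W ** transpose W"
proof -
  have a: "W ** transpose W ** V = V"
  proof -
    have "V = V ** L ** (transpose V ** V) ** Li" using V Li by (simp add: matrix_mul_assoc[symmetric])
    also have "\<dots> = (V ** L ** transpose V) ** V ** Li" by (simp add: matrix_mul_assoc)
    also have "\<dots> = W ** G ** transpose W ** V ** Li" using eq by simp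
    finally have 1: "V = W ** G ** transpose W ** V ** Li" .
    have "W ** transpose W ** V = W ** transpose W ** (W ** G ** transpose W ** V ** Li)"
      using 1 by metis
    also have "\<dots> = W ** (transpose W ** W) ** G ** transpose W ** V ** Li" by (simp add: matrix_mul_assoc)
    also have "\<dots> = V" using W 1 by simp
    finally show ?thesis .
  qed
  have b: "V ** transpose V ** W = W"
  proof -
    have "W = W ** G ** (transpose W ** W) ** Gi" using W Gi by (simp add: matrix_mul_assoc[symmetric])
    also have "\<dots> = (W ** G ** transpose W) ** W ** Gi" by (simp add: matrix_mul_assoc)
    also have "\<dots> = V ** L ** transpose V ** W ** Gi" using eq by simp
    finally have 1: "W = V ** L ** transpose V ** W ** Gi" .
    have "V ** transpose V ** W = V ** transpose V ** (V ** L ** transpose V ** W ** Gi)"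
      using 1 by metis
    also have "\<dots> = V ** (transpose V ** V) ** L ** transpose V ** W ** Gi" by (simp add: matrix_mul_assoc)
    also have "\<dots> = W" using V 1 by simp
    finally show ?thesis .
  qed
  have c: "W ** transpose W ** (V ** transpose V) = V ** transpose V"
    using a by (simp add: matrix_mul_assoc)
  have d: "V ** transpose V ** (W ** transpose W) = W ** transpose W"
    using b by (simp add: matrix_mul_assoc)
  have tv: "transpose (V ** transpose V) = V ** transpose V"
    by (simp add: matrix_transpose_mul)
  have tw: "transpose (W ** transpose W) = W ** transpose W"
    by (simp add: matrix_transpose_mul)
  have "transpose (W ** transpose W ** (V ** transpose V)) = V ** transpose V ** (W ** transpose W)"
    by (simp only: matrix_transpose_mul transpose_transpose)
  then show ?thesis using c d tv by metis
qed

lemma vcos_scale: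
  fixes v w :: "real^'m"
  assumes "a > 0" "b > 0"
  shows "vcos (a *\<^sub>R v) (b *\<^sub>R w) = vcos v w"
  using assms by (simp add: vcos_def)

lemma vcos_self: "v \<noteq> 0 \<Longrightarrow> vcos v v = 1"
  by (simp add: vcos_def dot_square_norm power2_eq_square)

lemma vcos_inner:
  fixes a b c d :: "real^'m"
  assumes "inner a b = inner c d" "inner a a = inner c c" "inner b b = inner d d"
  shows "vcos a b = vcos c d"
  using assms by (simp add: vcos_def norm_eq_sqrt_inner)

lemma diag_mul: "diag_mat a ** diag_mat b = diag_mat (\<chi> k. a$k * b$k)"
proof -
  have "\<And>i j. (\<Sum>k\<in>UNIV. (if i = k then a$i else 0) * (if k = j then b$k else 0)) = (if i = j then a$i * b$i else 0)"
  proof -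
    fix i j :: 'a
    have "(\<Sum>k\<in>UNIV. (if i = k then a$i else 0) * (if k = j then b$k else 0)) = (\<Sum>k\<in>UNIV. if k = i then (if i = j then a$i * b$i else 0) else 0)"
      by (rule sum.cong) auto
    then show "?thesis i j" by simp
  qed
  then show ?thesis by (simp add: vec_eq_iff diag_mat_def matrix_matrix_mult_def)
qed

lemma mat1_diag: "(mat 1 :: real^'n^'n) = diag_mat (\<chi> k. 1)"
  by (simp add: vec_eq_iff diag_mat_def mat_def)

lemma diag_transpose: "transpose (diag_mat v) = diag_mat v"
  by (simp add: vec_eq_iff diag_mat_def transpose_def)

lemma diag_mul_row: "(diag_mat v ** A) $ i = v$i *\<^sub>R A$i"
proof -
  have "\<And>j. (\<Sum>k\<in>UNIV. (if i = k then v$i else 0) * A$k$j) = v$i * A$i$j"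
  proof -
    fix j
    have "(\<Sum>k\<in>UNIV. (if i = k then v$i else 0) * A$k$j) = (\<Sum>k\<in>UNIV. if k = i then v$i * A$i$j else 0)"
      by (rule sum.cong) auto
    then show "?thesis j" by simp
  qed
  then show ?thesis by (simp add: vec_eq_iff diag_mat_def matrix_matrix_mult_def)
qed

lemma aat_inner: "(A ** transpose A) $ k $ l = inner (A$k) (A$l)"
  by (simp add: matrix_matrix_mult_def transpose_def inner_vec_def)



theorem lemma3:
  fixes Theta :: "real^'k^'n"
    and B :: "real^'k^'k"
    and theta :: "real^'n"
    and U :: "real^'k2^'n" and Sigma :: "real^'k2^'k2"
    and H :: "real^'k2^'k" and D :: "real^'k2^'k2"
  assumes Theta: "membership_mat Theta"
    and nonempty: "\<forall>k. \<exists>i. comm Theta i = k"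
    and B_sym: "transpose B = B"
    and B_range: "\<forall>k l. 0 \<le> B$k$l \<and> B$k$l \<le> 1"
    and B_rank: "rank B = CARD('k2)"
    and theta_pos: "\<forall>i. theta$i > 0"
    and theta_max: "\<forall>k. Max {theta$i | i. comm Theta i = k} = 1"
    and U_orth: "transpose U ** U = mat 1"
    and Sigma_diag: "is_diag Sigma"
    and P_eig: "diag_mat theta ** Theta ** B ** transpose Theta ** diag_mat theta
                  = U ** Sigma ** transpose U"
    and H_orth: "transpose H ** H = mat 1"
    and D_diag: "is_diag D"
    and Bbar_eig: "Omega_mat Theta theta ** B ** Omega_mat Theta theta
                  = H ** D ** transpose H"
  shows
    "(CARD('k2) = CARD('k) \<longrightarrow>
        (\<forall>i j. (Theta$i = Theta$j \<longrightarrow> vcos (U$i) (U$j) = 1) \<and>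
               (Theta$i \<noteq> Theta$j \<longrightarrow> vcos (U$i) (U$j) = 0))) \<and>
     (CARD('k2) < CARD('k) \<longrightarrow>
        (\<forall>i j. Theta$i = Theta$j \<and> U$i \<noteq> 0 \<longrightarrow> vcos (U$i) (U$j) = 1) \<and>
        (\<forall>xi::real. xi < 1 \<and> (\<forall>k l. k \<noteq> l \<longrightarrow> vcos (H$k) (H$l) \<le> xi) \<longrightarrow>
           (\<forall>i j. Theta$i \<noteq> Theta$j \<longrightarrow>
              vcos (U$i) (U$j) = vcos (H$(comm Theta i)) (H$(comm Theta j)) \<and>
              vcos (H$(comm Theta i)) (H$(comm Theta j)) \<le> xi \<and> xi < 1)))"
proof -
  let ?g = "comm Theta"
  have Th: "\<And>i k. Theta$i$k = (if ?g i = k then 1 else 0)"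
  proof -
    fix i k
    have ex: "\<exists>!k. Theta$i$k = 1" using Theta unfolding membership_mat_def by blast
    have g1: "Theta$i$(?g i) = 1" unfolding comm_def using theI'[OF ex] .
    show "Theta$i$k = (if ?g i = k then 1 else 0)"
    proof (cases "?g i = k")
      case True then show ?thesis using g1 by simp
    next
      case False
      then have "Theta$i$k \<noteq> 1" using ex g1 by blast
      then show ?thesis using False Theta unfolding membership_mat_def by metis
    qed
  qed
  have ThEq: "\<And>i j. (Theta$i = Theta$j) = (?g i = ?g j)"
  proof -
    fix i j
    show "(Theta$i = Theta$j) = (?g i = ?g j)"
    proof
      assume "Theta$i = Theta$j"
      then have "Theta$i$(?g i) = Theta$j$(?g i)" by simp
      then show "?g i = ?g j" using Th by (auto split: if_splits)
    qed (simp add: vec_eq_iff Th)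
  qed
  define w where "w = (\<chi> k. norm (phi Theta theta k))"
  have wpos: "\<And>k. w$k > 0"
  proof -
    fix k
    obtain i where i: "?g i = k" using nonempty by blast
    have "phi Theta theta k $ i = theta$i" using i by (simp add: phi_def)
    then have "phi Theta theta k \<noteq> 0" using theta_pos by (metis less_irrefl zero_index)
    then show "w$k > 0" by (simp add: w_def)
  qed
  have wsq: "\<And>k. (w$k)^2 = (\<Sum>i\<in>UNIV. if ?g i = k then (theta$i)^2 else 0)"
  proof -
    fix k
    have "(w$k)^2 = inner (phi Theta theta k) (phi Theta theta k)"
      by (simp add: w_def power2_norm_eq_inner)
    also have "\<dots> = (\<Sum>i\<in>UNIV. if ?g i = k then (theta$i)^2 else 0)"
      unfolding inner_vec_def phi_def by (rule sum.cong) (auto simp: power2_eq_square)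
    finally show "(w$k)^2 = (\<Sum>i\<in>UNIV. if ?g i = k then (theta$i)^2 else 0)" .
  qed
  define Om where "Om = Omega_mat Theta theta"
  have Om_def': "Om = diag_mat w" by (simp add: Om_def Omega_mat_def w_def)
  define T where "T = diag_mat theta ** Theta"
  have Tent: "\<And>i k. T$i$k = (if ?g i = k then theta$i else 0)"
    by (simp add: T_def diag_mul_row Th)
  have TT: "transpose T ** T = Om ** Om"
  proof -
    have "\<And>k l. (\<Sum>i\<in>UNIV. T$i$k * T$i$l) = (if k = l then (w$k)^2 else 0)"
    proof -
      fix k l
      show "(\<Sum>i\<in>UNIV. T$i$k * T$i$l) = (if k = l then (w$k)^2 else 0)"
      proof (cases "k = l")
        case True
        then show ?thesis unfolding wsq by (auto simp: Tent power2_eq_square intro!: sum.cong)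
      next
        case False
        then have "\<And>i. T$i$k * T$i$l = 0" by (simp add: Tent)
        then show ?thesis using False by (metis (no_types, lifting) sum.neutral)
      qed
    qed
    moreover have "Om ** Om = diag_mat (\<chi> k. (w$k)^2)" by (simp add: Om_def' diag_mul power2_eq_square)
    ultimately show ?thesis
      by (simp add: vec_eq_iff diag_mat_def matrix_matrix_mult_def transpose_def)
  qed
  define Oi where "Oi = diag_mat (\<chi> k. 1 / w$k)"
  have OiOm: "Oi ** Om = mat 1"
    using wpos by (simp add: Oi_def Om_def' diag_mul mat1_diag less_imp_neq[symmetric])
  have OmT: "transpose Om = Om" by (simp add: Om_def' diag_transpose)
  define Mi where "Mi = Oi ** Oi ** transpose T"
  have MiT: "Mi ** T = mat 1"
  proof -
    have "Mi ** T = Oi ** (Oi ** (transpose T ** T))" by (simp add: Mi_def matrix_mul_assoc)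
    also have "\<dots> = Oi ** ((Oi ** Om) ** Om)" by (simp add: TT matrix_mul_assoc)
    also have "\<dots> = mat 1" by (simp add: OiOm)
    finally show ?thesis .
  qed
  have TtMit: "transpose T ** transpose Mi = mat 1"
    using MiT by (metis matrix_transpose_mul transpose_mat)
  define P where "P = U ** Sigma ** transpose U"
  have PT: "P = T ** B ** transpose T"
    using P_eig by (simp add: P_def T_def matrix_transpose_mul diag_transpose matrix_mul_assoc)
  have BMi: "B = (Mi ** U) ** Sigma ** transpose (Mi ** U)"
  proof -
    have "B = (Mi ** T) ** B ** (transpose T ** transpose Mi)" by (simp add: MiT TtMit)
    also have "\<dots> = Mi ** (T ** B ** transpose T) ** transpose Mi" by (simp add: matrix_mul_assoc)
    also have "\<dots> = Mi ** (U ** Sigma ** transpose U) ** transpose Mi" by (simp add: PT[symmetric] P_def)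
    also have "\<dots> = (Mi ** U) ** Sigma ** transpose (Mi ** U)" by (simp add: matrix_mul_assoc matrix_transpose_mul)
    finally show ?thesis .
  qed
  have rS: "rank Sigma = CARD('k2)"
  proof -
    have "rank B \<le> rank ((Mi ** U) ** Sigma)" by (subst BMi) (rule rank_mul_le_left)
    also have "\<dots> \<le> rank Sigma" by (rule rank_mul_le_right)
    finally show ?thesis using B_rank rank_bound[of Sigma] by simp
  qed
  obtain Si where Si: "Sigma ** Si = mat 1" using rinv_full_rank[OF rS] by blast
  define X where "X = B ** transpose T ** U ** Si"
  have UTX: "U = T ** X"
  proof -
    have "T ** X = (U ** Sigma ** transpose U) ** U ** Si"
      by (simp add: X_def PT[symmetric] P_def[symmetric] matrix_mul_assoc)
    also have "\<dots> = U ** Sigma ** (transpose U ** U) ** Si" by (simp add: matrix_mul_assoc)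
    also have "\<dots> = U" using U_orth Si by (simp add: matrix_mul_assoc[symmetric])
    finally show ?thesis by simp
  qed
  have Urow: "\<And>i. U$i = theta$i *\<^sub>R X$(?g i)"
  proof -
    fix i
    have "\<And>c. (\<Sum>k\<in>UNIV. T$i$k * X$k$c) = theta$i * X$(?g i)$c"
    proof -
      fix c
      have "(\<Sum>k\<in>UNIV. T$i$k * X$k$c) = (\<Sum>k\<in>UNIV. if k = ?g i then theta$i * X$(?g i)$c else 0)"
        by (rule sum.cong) (auto simp: Tent)
      then show "?thesis c" by simp
    qed
    then show "U$i = theta$i *\<^sub>R X$(?g i)"
      by (subst UTX) (simp add: vec_eq_iff matrix_matrix_mult_def)
  qed
  define Y where "Y = Om ** X"
  have Yrow: "\<And>k. Y$k = w$k *\<^sub>R X$k" by (simp add: Y_def Om_def' diag_mul_row)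
  have YY: "transpose Y ** Y = mat 1"
  proof -
    have "transpose Y ** Y = transpose X ** (transpose T ** T) ** X"
      by (simp add: Y_def TT matrix_transpose_mul OmT matrix_mul_assoc)
    also have "\<dots> = transpose U ** U" by (simp add: UTX matrix_transpose_mul matrix_mul_assoc)
    finally show ?thesis using U_orth by simp
  qed
  have Ucos: "\<And>i j. vcos (U$i) (U$j) = vcos (Y$(?g i)) (Y$(?g j))"
  proof -
    fix i j
    have "\<And>i. U$i = (theta$i / w$(?g i)) *\<^sub>R Y$(?g i)"
      using wpos by (simp add: Urow Yrow less_imp_neq[symmetric])
    then show "vcos (U$i) (U$j) = vcos (Y$(?g i)) (Y$(?g j))"
      using wpos theta_pos by (simp add: vcos_scale)
  qed
  have Unz: "\<And>i. U$i \<noteq> 0 \<Longrightarrow> Y$(?g i) \<noteq> 0"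
    by (simp add: Urow Yrow) (metis wpos less_irrefl scaleR_eq_0_iff)
  have Yinner: "\<And>k l. inner (Y$k) (Y$l) = (Y ** transpose Y)$k$l" by (simp add: aat_inner)
  have partA: "CARD('k2) = CARD('k) \<longrightarrow>
        (\<forall>i j. (Theta$i = Theta$j \<longrightarrow> vcos (U$i) (U$j) = 1) \<and>
               (Theta$i \<noteq> Theta$j \<longrightarrow> vcos (U$i) (U$j) = 0))"
  proof
    assume card: "CARD('k2) = CARD('k)"
    have "inj ((*v) Y)" using YY matrix_left_invertible_injective by blast
    then have "rank Y = CARD('k)" using full_rank_injective card by metis
    then obtain R where R: "Y ** R = mat 1" using full_rank_surjective matrix_right_invertible_surjective by metis
    have "transpose Y = R"
    proof -
      have "transpose Y = transpose Y ** (Y ** R)" by (simp add: R)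
      also have "\<dots> = R" by (simp add: matrix_mul_assoc YY)
      finally show ?thesis .
    qed
    then have YYt: "Y ** transpose Y = mat 1" using R by simp
    have ip: "\<And>k l. inner (Y$k) (Y$l) = (if k = l then 1 else 0)"
      by (simp add: Yinner YYt mat_def)
    show "\<forall>i j. (Theta$i = Theta$j \<longrightarrow> vcos (U$i) (U$j) = 1) \<and>
               (Theta$i \<noteq> Theta$j \<longrightarrow> vcos (U$i) (U$j) = 0)"
    proof (intro allI conjI impI)
      fix i j
      assume "Theta$i = Theta$j"
      then have e: "?g i = ?g j" using ThEq by blast
      have "Y$(?g i) \<noteq> 0" using ip[of "?g i" "?g i"] by auto
      then show "vcos (U$i) (U$j) = 1" using Ucos e vcos_self by metis
    next
      fix i j
      assume "Theta$i \<noteq> Theta$j"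
      then have e: "?g i \<noteq> ?g j" using ThEq by blast
      show "vcos (U$i) (U$j) = 0" using Ucos ip e by (simp add: vcos_def)
    qed
  qed
  have MiU: "Mi ** U = X" using UTX MiT by (simp add: matrix_mul_assoc)
  have BX: "B = X ** Sigma ** transpose X" using BMi MiU by simp
  have BbarY: "Om ** B ** Om = Y ** Sigma ** transpose Y"
    by (simp add: BX Y_def matrix_transpose_mul OmT matrix_mul_assoc)
  have BbarH: "Y ** Sigma ** transpose Y = H ** D ** transpose H"
    using BbarY Bbar_eig Om_def by simp
  have rD: "rank D = CARD('k2)"
  proof -
    have "Sigma = (transpose Y ** Y) ** Sigma ** (transpose Y ** Y)" by (simp add: YY)
    also have "\<dots> = transpose Y ** (Y ** Sigma ** transpose Y) ** Y" by (simp add: matrix_mul_assoc)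
    also have "\<dots> = (transpose Y ** H) ** D ** (transpose H ** Y)" by (simp add: BbarH matrix_mul_assoc)
    finally have "rank Sigma \<le> rank ((transpose Y ** H) ** D)"
      by (metis rank_mul_le_left)
    also have "\<dots> \<le> rank D" by (rule rank_mul_le_right)
    finally show ?thesis using rS rank_bound[of D] by simp
  qed
  obtain Di where Di: "D ** Di = mat 1" using rinv_full_rank[OF rD] by blast
  have YH: "Y ** transpose Y = H ** transpose H"
    by (rule proj_eq[OF YY H_orth Si Di BbarH])
  have YHin: "\<And>k l. inner (Y$k) (Y$l) = inner (H$k) (H$l)"
    using YH by (metis aat_inner)
  have partB: "CARD('k2) < CARD('k) \<longrightarrow>
        (\<forall>i j. Theta$i = Theta$j \<and> U$i \<noteq> 0 \<longrightarrow> vcos (U$i) (U$j) = 1) \<and>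
        (\<forall>xi::real. xi < 1 \<and> (\<forall>k l. k \<noteq> l \<longrightarrow> vcos (H$k) (H$l) \<le> xi) \<longrightarrow>
           (\<forall>i j. Theta$i \<noteq> Theta$j \<longrightarrow>
              vcos (U$i) (U$j) = vcos (H$(comm Theta i)) (H$(comm Theta j)) \<and>
              vcos (H$(comm Theta i)) (H$(comm Theta j)) \<le> xi \<and> xi < 1))"
  proof (intro impI conjI allI; (elim conjE)?)
    fix i j
    assume a1: "Theta$i = Theta$j" and a2: "U$i \<noteq> 0"
    have a: "Theta$i = Theta$j \<and> U$i \<noteq> 0" using a1 a2 by simp
    then have e: "?g i = ?g j" using ThEq by blast
    have "Y$(?g i) \<noteq> 0" using a Unz by blast
    then show "vcos (U$i) (U$j) = 1" using Ucos e vcos_self by metis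
  next
    fix xi :: real and i j
    assume b: "Theta$i \<noteq> Theta$j"
    then have e: "?g i \<noteq> ?g j" using ThEq by blast
    show "vcos (U$i) (U$j) = vcos (H$(comm Theta i)) (H$(comm Theta j))"
      using Ucos vcos_inner YHin by metis
  next
    fix xi :: real and i j
    assume a: "\<forall>k l. k \<noteq> l \<longrightarrow> vcos (H$k) (H$l) \<le> xi" and b: "Theta$i \<noteq> Theta$j"
    then have e: "?g i \<noteq> ?g j" using ThEq by blast
    then show "vcos (H$(comm Theta i)) (H$(comm Theta j)) \<le> xi" using a by simp
  next
    fix xi :: real
    assume "xi < 1" then show "xi < 1" .
  qed
  show ?thesis using partA partB by blast
qed

end
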